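(* Let $A$ be an associative unital algebra over a field $k$ and $\delta$ a $k$-linear derivation of $A$ such that $\delta$ is locally nilpotent if $\mathrm{char}(k)=0$, and $\delta^p=0$ if $\mathrm{char}(k)=p>0$. Suppose $\delta(x)=1$ for some $x\in A$. Then $A^\delta$ is a left Ore domain if and only if $A$ is a critically compressible left $A[z;\delta]$-module.
   Context: $A^\delta=\ker\delta$. $A[z;\delta]$ is the differential operator ring ($A[z]$ as left $A$-module, $za=az+\delta(a)$), acting on $A$ by $(\sum_i a_iz^i)\cdot x=\sum_ia_i\delta^i(x)$; $\mathrm{End}_{A[z;\delta]}(A)\cong A^\delta$. A left Ore domain is a domain $S$ with $Sa\cap Sb\neq0$ for nonzero $a,b$. A nonzero module is critically compressible if it embeds into each of its nonzero submodules and into none of its factor modules $M/N$ with $N\neq0$. *)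

theory Defs
  imports Main
begin

text \<open>A k-algebra structure on the ring 'a: a unital ring homomorphism from the
field 'k into the centre of 'a.\<close>
definition algebra_map :: "('k::field \<Rightarrow> 'a::ring_1) \<Rightarrow> bool" where
  "algebra_map phi \<longleftrightarrow> phi 1 = 1 \<and> (\<forall>c d. phi (c + d) = phi c + phi d)
     \<and> (\<forall>c d. phi (c * d) = phi c * phi d) \<and> (\<forall>c a. phi c * a = a * phi c)"

definition k_derivation :: "('k::field \<Rightarrow> 'a::ring_1) \<Rightarrow> ('a \<Rightarrow> 'a) \<Rightarrow> bool" where
  "k_derivation phi \<delta> \<longleftrightarrow> (\<forall>a b. \<delta> (a + b) = \<delta> a + \<delta> b)
     \<and> (\<forall>c a. \<delta> (phi c * a) = phi c * \<delta> a)
     \<and> (\<forall>a b. \<delta> (a * b) = \<delta> a * b + a * \<delta> b)"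

definition locally_nilpotent :: "('a::zero \<Rightarrow> 'a) \<Rightarrow> bool" where
  "locally_nilpotent \<delta> \<longleftrightarrow> (\<forall>a. \<exists>n. (\<delta> ^^ n) a = 0)"

definition constants :: "('a::ring_1 \<Rightarrow> 'a) \<Rightarrow> 'a set" where
  "constants \<delta> = {a. \<delta> a = 0}"

text \<open>Elements of A[z;\<delta>] (i.e. A[z] as a left
  A-module) are represented by their coefficient lists.\<close>
definition dop_act :: "('a::ring_1 \<Rightarrow> 'a) \<Rightarrow> 'a list \<Rightarrow> 'a \<Rightarrow> 'a" where
  "dop_act \<delta> cs x = (\<Sum>i<length cs. cs ! i * (\<delta> ^^ i) x)"

definition dsubmodule :: "('a::ring_1 \<Rightarrow> 'a) \<Rightarrow> 'a set \<Rightarrow> bool" where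
  "dsubmodule \<delta> N \<longleftrightarrow> 0 \<in> N \<and> (\<forall>x\<in>N. \<forall>y\<in>N. x + y \<in> N) \<and> (\<forall>x\<in>N. - x \<in> N)
     \<and> (\<forall>cs. \<forall>x\<in>N. dop_act \<delta> cs x \<in> N)"

definition dhom :: "('a::ring_1 \<Rightarrow> 'a) \<Rightarrow> ('a \<Rightarrow> 'a) \<Rightarrow> bool" where
  "dhom \<delta> f \<longleftrightarrow> (\<forall>x y. f (x + y) = f x + f y)
     \<and> (\<forall>cs x. f (dop_act \<delta> cs x) = dop_act \<delta> cs (f x))"

definition embeds_into_sub :: "('a::ring_1 \<Rightarrow> 'a) \<Rightarrow> 'a set \<Rightarrow> bool" where
  "embeds_into_sub \<delta> N \<longleftrightarrow> (\<exists>f. dhom \<delta> f \<and> inj f \<and> range f \<subseteq> N)"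

text \<open>A embeds (as A[z;\<delta>]-module) into the factor module A/N.  A map A \<rightarrow> A/N is
  given by a map f choosing representatives: x \<mapsto> f x + N.\<close>
definition embeds_into_factor :: "('a::ring_1 \<Rightarrow> 'a) \<Rightarrow> 'a set \<Rightarrow> bool" where
  "embeds_into_factor \<delta> N \<longleftrightarrow> (\<exists>f.
       (\<forall>x y. f (x + y) - (f x + f y) \<in> N)
     \<and> (\<forall>cs x. f (dop_act \<delta> cs x) - dop_act \<delta> cs (f x) \<in> N)
     \<and> (\<forall>x. f x \<in> N \<longrightarrow> x = 0))"

definition critically_compressible :: "('a::ring_1 \<Rightarrow> 'a) \<Rightarrow> bool" where
  "critically_compressible \<delta> \<longleftrightarrow> (\<exists>a::'a. a \<noteq> 0)
     \<and> (\<forall>N. dsubmodule \<delta> N \<and> N \<noteq> {0} \<longrightarrow> embeds_into_sub \<delta> N)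
     \<and> (\<forall>N. dsubmodule \<delta> N \<and> N \<noteq> {0} \<longrightarrow> \<not> embeds_into_factor \<delta> N)"

definition left_Ore_domain :: "'a::ring_1 set \<Rightarrow> bool" where
  "left_Ore_domain S \<longleftrightarrow> (1::'a) \<noteq> 0
     \<and> (\<forall>a\<in>S. \<forall>b\<in>S. a * b = 0 \<longrightarrow> a = 0 \<or> b = 0)
     \<and> (\<forall>a\<in>S. \<forall>b\<in>S. a \<noteq> 0 \<longrightarrow> b \<noteq> 0 \<longrightarrow> (\<exists>s\<in>S. \<exists>t\<in>S. s * a = t * b \<and> s * a \<noteq> 0))"

end

theory Submission
  imports Defs "HOL-Computational_Algebra.Euclidean_Algorithm" "HOL-Computational_Algebra.Primes"
begin

locale der =
  fixes d :: "'a::ring_1 \<Rightarrow> 'a"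
  assumes add: "d (a + b) = d a + d b" and leib: "d (a * b) = d a * b + a * d b"
begin
lemma zero[simp]: "d 0 = 0" using add[of 0 0] by simp
lemma neg: "d (-a) = - d a" using add[of a "-a"] by (simp add: eq_neg_iff_add_eq_0 add.commute)
lemma diff: "d (a - b) = d a - d b" using add[of a "-b"] neg by simp
lemma one: "d 1 = 0" using leib[of 1 1] by simp
lemma pow_zero[simp]: "(d^^n) 0 = 0" by (induct n) auto
lemma pow_add: "(d^^n)(a+b) = (d^^n) a + (d^^n) b" by (induct n) (auto simp: add)
lemma pow_diff: "(d^^n)(a-b) = (d^^n) a - (d^^n) b" by (induct n) (auto simp: diff)
lemma pow_mult_const: "d c = 0 \<Longrightarrow> (d^^n)(a*c) = (d^^n) a * c" by (induct n) (auto simp: leib)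
lemma dop_mult_const: "d c = 0 \<Longrightarrow> dop_act d cs (y*c) = dop_act d cs y * c"
  unfolding dop_act_def by (simp add: pow_mult_const sum_distrib_right mult.assoc)
lemma dop_zero: "dop_act d cs 0 = 0" by (simp add: dop_act_def)
lemma last_nz: "y \<noteq> 0 \<Longrightarrow> (d^^n) y = 0 \<Longrightarrow> \<exists>k. (d^^k) y \<noteq> 0 \<and> d ((d^^k) y) = 0"
proof (induct n)
  case 0 then show ?case by simp
next
  case (Suc n)
  show ?case
  proof (cases "(d^^n) y = 0")
    case True with Suc show ?thesis by blast
  next
    case False with Suc.prems show ?thesis by auto
  qed
qed
lemma d_ofnat: "d (of_nat k * y) = of_nat k * d y"
  by (induct k) (auto simp: add distrib_right)
lemma pow_ofnat: "(d^^n) (of_nat k * y) = of_nat k * (d^^n) y"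
  by (induct n) (auto simp: d_ofnat)
lemma xpow: "d x = 1 \<Longrightarrow> d (x^Suc n) = of_nat (Suc n) * x^n"
proof (induct n)
  case 0 then show ?case by simp
next
  case (Suc n)
  have "d (x^Suc (Suc n)) = d (x * x^Suc n)" by simp
  also have "\<dots> = x^Suc n + x * (of_nat (Suc n) * x^n)" using Suc by (simp add: leib)
  also have "\<dots> = x^Suc n + of_nat (Suc n) * x^Suc n"
  proof -
    have "x * (of_nat (Suc n) * x^n) = (x * of_nat (Suc n)) * x^n" by (simp only: mult.assoc)
    also have "\<dots> = (of_nat (Suc n) * x) * x^n" by (simp only: mult_of_nat_commute)
    finally show ?thesis by (simp only: mult.assoc power_Suc)
  qed
  also have "\<dots> = of_nat (Suc (Suc n)) * x^Suc n" by (simp add: algebra_simps)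
  finally show ?case .
qed
lemma xpow_pow: "d x = 1 \<Longrightarrow> (d^^n) (x^n) = of_nat (fact n)"
proof (induct n)
  case 0 then show ?case by simp
next
  case (Suc n)
  have "(d^^Suc n) (x^Suc n) = (d^^n) (d (x^Suc n))" by (simp add: funpow_Suc_right del: funpow.simps)
  also have "\<dots> = of_nat (Suc n) * of_nat (fact n)" using Suc xpow[of x n] by (simp add: pow_ofnat del: of_nat_Suc power_Suc)
  finally show ?case by (simp only: fact_Suc of_nat_mult of_nat_id id_def)
qed
end

lemma dop_single: "dop_act \<delta> [a] y = a * y" by (simp add: dop_act_def)
lemma dop_d: "dop_act \<delta> [0,1] y = \<delta> y" by (simp add: dop_act_def numeral_2_eq_2)

lemma sub_mult: "dsubmodule \<delta> N \<Longrightarrow> n \<in> N \<Longrightarrow> a * n \<in> N"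
  unfolding dsubmodule_def by (metis dop_single)
lemma sub_d: "dsubmodule \<delta> N \<Longrightarrow> n \<in> N \<Longrightarrow> \<delta> n \<in> N"
  unfolding dsubmodule_def by (metis dop_d)
lemma sub_dpow: "dsubmodule \<delta> N \<Longrightarrow> n \<in> N \<Longrightarrow> (\<delta>^^k) n \<in> N"
  by (induct k) (auto intro: sub_d)
lemma sub_add: "dsubmodule \<delta> N \<Longrightarrow> n \<in> N \<Longrightarrow> m \<in> N \<Longrightarrow> n + m \<in> N"
  unfolding dsubmodule_def by blast
lemma sub_neg: "dsubmodule \<delta> N \<Longrightarrow> n \<in> N \<Longrightarrow> - n \<in> N"
  unfolding dsubmodule_def by blast
lemma sub_diff: "dsubmodule \<delta> N \<Longrightarrow> n \<in> N \<Longrightarrow> m \<in> N \<Longrightarrow> n - m \<in> N"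
  using sub_add[of \<delta> N n "-m"] sub_neg by auto
lemma sub_zero: "dsubmodule \<delta> N \<Longrightarrow> 0 \<in> N"
  unfolding dsubmodule_def by blast

lemma phi_zero: "algebra_map phi \<Longrightarrow> phi 0 = 0"
proof -
  assume "algebra_map phi"
  then have "phi (0 + 0) = phi 0 + phi 0" unfolding algebra_map_def by blast
  then show ?thesis by simp
qed
lemma phi_ofnat: "algebra_map phi \<Longrightarrow> phi (of_nat n) = of_nat n"
proof (induct n)
  case 0 then show ?case by (simp add: phi_zero)
next
  case (Suc n)
  have "phi (of_nat (Suc n)) = phi (1 + of_nat n)" by simp
  also have "\<dots> = phi 1 + phi (of_nat n)" using Suc.prems unfolding algebra_map_def by blast
  also have "\<dots> = 1 + of_nat n"
  proof -
    have "phi 1 = 1" using Suc.prems unfolding algebra_map_def by blast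
    then show ?thesis using Suc by simp
  qed
  finally show ?case by simp
qed
lemma phi_pow: "k_derivation phi d \<Longrightarrow> (d^^n) (phi c * a) = phi c * (d^^n) a"
proof -
  assume "k_derivation phi d"
  then have h: "\<And>c a. d (phi c * a) = phi c * d a" unfolding k_derivation_def by blast
  show ?thesis by (induct n) (simp_all add: h)
qed

lemma reduce:
  fixes phi :: "'k::field \<Rightarrow> 'a::ring_1"
  assumes D: "der d" and kd: "k_derivation phi d" and am: "algebra_map phi" and dx: "d x = 1"
    and N: "dsubmodule d N"
    and fnz: "\<forall>y m. (d^^m) y \<noteq> 0 \<longrightarrow> (of_nat (fact m) :: 'k) \<noteq> 0"
  shows "d g \<in> N \<Longrightarrow> (d^^Suc m) g = 0 \<Longrightarrow> \<exists>c. d c = 0 \<and> g - c \<in> N"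
proof (induct m arbitrary: g)
  case 0
  then show ?case using sub_zero[OF N] by (intro exI[of _ g]) simp
next
  case (Suc m)
  define e where "e = (d^^Suc m) g"
  show ?case
  proof (cases "e = 0")
    case True
    then have "(d^^Suc m) g = 0" by (simp only: e_def[symmetric])
    then show ?thesis by (rule Suc.hyps[OF Suc.prems(1)])
  next
    case False
    define F where "F = (of_nat (fact (Suc m)) :: 'k)"
    have F: "F \<noteq> 0" using fnz False unfolding e_def F_def by blast
    define w where "w = phi (inverse F) * x^Suc m"
    define g' where "g' = g - w * e"
    have de: "d e = 0" using Suc.prems(2) unfolding e_def by simp
    have eN: "e \<in> N" unfolding e_def using sub_dpow[OF N Suc.prems(1), of m]
      by (simp add: funpow_Suc_right del: funpow.simps)
    have weN: "w * e \<in> N" using sub_mult[OF N eN] .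
    have "d g' = d g - d (w * e)" unfolding g'_def using der.diff[OF D] by simp
    also have "\<dots> = d g - d w * e" using der.leib[OF D, of w e] de by simp
    finally have dg': "d g' \<in> N" using sub_diff[OF N Suc.prems(1) sub_mult[OF N eN]] by simp
    have phiF: "phi (inverse F) * of_nat (fact (Suc m)) = 1"
    proof -
      have "of_nat (fact (Suc m)) = phi F" unfolding F_def by (rule phi_ofnat[OF am, symmetric])
      moreover have "phi (inverse F * F) = phi (inverse F) * phi F"
        using am unfolding algebra_map_def by blast
      ultimately have "phi (inverse F) * of_nat (fact (Suc m)) = phi (inverse F * F)"
        by simp
      also have "inverse F * F = 1" using F by simp
      also have "phi 1 = 1" using am unfolding algebra_map_def by blast
      finally show ?thesis .
    qed
    have "(d^^Suc m) g' = e - (d^^Suc m) (w * e)" by (simp only: g'_def der.pow_diff[OF D] e_def)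
    also have "(d^^Suc m) (w * e) = (d^^Suc m) w * e" using der.pow_mult_const[OF D de] .
    also have "(d^^Suc m) w = phi (inverse F) * of_nat (fact (Suc m))"
      unfolding w_def by (simp only: phi_pow[OF kd] der.xpow_pow[OF D dx])
    finally have "(d^^Suc m) g' = 0" by (simp only: phiF mult_1_left diff_self)
    then have "\<exists>c. d c = 0 \<and> g' - c \<in> N" by (rule Suc.hyps[OF dg'])
    then obtain c where c: "d c = 0" "g' - c \<in> N" by (elim exE conjE)
    have "g - c = (g' - c) + w * e" unfolding g'_def by simp
    then have "g - c \<in> N" using sub_add[OF N c(2) weN] by (simp only:)
    then show ?thesis using c(1) by (intro exI[of _ c] conjI)
  qed
qed


context der begin
lemma range_sub: "d b = 0 \<Longrightarrow> dsubmodule d (range (\<lambda>y. y * b))"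
  unfolding dsubmodule_def
proof (intro conjI ballI allI)
  assume b: "d b = 0"
  show "0 \<in> range (\<lambda>y. y * b)" by (rule range_eqI[of _ _ 0]) simp
  fix u v assume "u \<in> range (\<lambda>y. y * b)" "v \<in> range (\<lambda>y. y * b)"
  then obtain y z where "u = y * b" "v = z * b" by blast
  then show "u + v \<in> range (\<lambda>y. y * b)" by (intro range_eqI[of _ _ "y + z"]) (simp add: distrib_right)
next
  fix u assume "u \<in> range (\<lambda>y. y * b)"
  then obtain y where "u = y * b" by blast
  then show "- u \<in> range (\<lambda>y. y * b)" by (intro range_eqI[of _ _ "- y"]) simp
next
  fix cs u assume b: "d b = 0" and "u \<in> range (\<lambda>y. y * b)"
  then obtain y where "u = y * b" by blast
  then show "dop_act d cs u \<in> range (\<lambda>y. y * b)"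
    using dop_mult_const[OF b] by (intro range_eqI[of _ _ "dop_act d cs y"]) simp
qed

lemma ann_sub: "d b = 0 \<Longrightarrow> dsubmodule d {y. y * b = 0}"
  unfolding dsubmodule_def
proof (intro conjI ballI allI)
  assume b: "d b = 0"
  show "0 \<in> {y. y * b = 0}" by simp
  fix u v assume "u \<in> {y. y * b = 0}" "v \<in> {y. y * b = 0}"
  then show "u + v \<in> {y. y * b = 0}" by (simp add: distrib_right)
next
  fix u assume "u \<in> {y. y * b = 0}"
  then show "- u \<in> {y. y * b = 0}" by simp
next
  fix cs u assume b: "d b = 0" and "u \<in> {y. y * b = 0}"
  then show "dop_act d cs u \<in> {y. y * b = 0}"
    using dop_mult_const[OF b, of cs u] by (simp add: dop_zero)
qed
end

theorem corollary3p11: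
  fixes phi :: "'k::field \<Rightarrow> 'a::ring_1" and \<delta> :: "'a \<Rightarrow> 'a" and x :: 'a
  assumes "algebra_map phi"
    and "k_derivation phi \<delta>"
    and "CHAR('k) = 0 \<longrightarrow> locally_nilpotent \<delta>"
    and "CHAR('k) > 0 \<longrightarrow> (\<forall>a. (\<delta> ^^ CHAR('k)) a = 0)"
    and "\<delta> x = 1"
  shows "left_Ore_domain (constants \<delta>) \<longleftrightarrow> critically_compressible \<delta>"
proof -
  note am = assms(1) and kd = assms(2) and dx = assms(5)
  have D: "der \<delta>" using kd unfolding k_derivation_def by unfold_locales blast+
  interpret der \<delta> by (rule D)
  have nil: "\<And>g. \<exists>n. (\<delta>^^n) g = 0"
  proof -
    fix g
    show "\<exists>n. (\<delta>^^n) g = 0"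
    proof (cases "CHAR('k) = 0")
      case True
      then show ?thesis using assms(3) unfolding locally_nilpotent_def by blast
    next
      case False
      then show ?thesis using assms(4) by blast
    qed
  qed
  have fnz: "\<And>y m. (\<delta>^^m) y \<noteq> 0 \<Longrightarrow> (of_nat (fact m) :: 'k) \<noteq> 0"
  proof
    fix y m assume h: "(\<delta>^^m) y \<noteq> 0" and z: "(of_nat (fact m) :: 'k) = 0"
    then have dv: "CHAR('k) dvd fact m" by (simp add: of_nat_eq_0_iff_char_dvd)
    show False
    proof (cases "CHAR('k) = 0")
      case True
      then show False using dv by simp
    next
      case False
      then have p: "CHAR('k) > 0" by simp
      then have "prime CHAR('k)" by (rule prime_CHAR_semidom)
      then have le: "CHAR('k) \<le> m" using dv prime_dvd_fact_iff by blast
      have "(\<delta>^^m) y = (\<delta>^^(m - CHAR('k) + CHAR('k))) y" using le by simp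
      also have "\<dots> = (\<delta>^^(m - CHAR('k))) ((\<delta>^^CHAR('k)) y)" by (simp only: funpow_add o_def)
      also have "\<dots> = 0" using assms(4) p by simp
      finally show False using h by simp
    qed
  qed
  have fnz': "\<forall>y m. (\<delta>^^m) y \<noteq> 0 \<longrightarrow> (of_nat (fact m) :: 'k) \<noteq> 0" using fnz by blast
  have red: "\<And>N g. dsubmodule \<delta> N \<Longrightarrow> \<delta> g \<in> N \<Longrightarrow> \<exists>c. \<delta> c = 0 \<and> g - c \<in> N"
  proof -
    fix N g assume N: "dsubmodule \<delta> N" and g: "\<delta> g \<in> N"
    obtain n where n: "(\<delta>^^n) g = 0" using nil by blast
    then have "(\<delta>^^Suc n) g = 0" by simp
    then show "\<exists>c. \<delta> c = 0 \<and> g - c \<in> N"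
      by (rule reduce[where phi=phi and d=\<delta> and x=x and N=N and g=g and m=n, OF D kd am dx N fnz' g])
  qed
  have nzconst: "\<And>N. dsubmodule \<delta> N \<Longrightarrow> N \<noteq> {0} \<Longrightarrow> \<exists>c\<in>N. c \<noteq> 0 \<and> \<delta> c = 0"
  proof -
    fix N assume N: "dsubmodule \<delta> N" and ne: "N \<noteq> {0}"
    obtain n where nN: "n \<in> N" and n0: "n \<noteq> 0" using ne sub_zero[OF N] by blast
    obtain m where "(\<delta>^^m) n = 0" using nil by blast
    then obtain k where k: "(\<delta>^^k) n \<noteq> 0" "\<delta> ((\<delta>^^k) n) = 0" using last_nz[OF n0] by blast
    then show "\<exists>c\<in>N. c \<noteq> 0 \<and> \<delta> c = 0" using sub_dpow[OF N nN, of k] by blast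
  qed
  show ?thesis
  proof
    assume L: "left_Ore_domain (constants \<delta>)"
    have one: "(1::'a) \<noteq> 0" using L unfolding left_Ore_domain_def by blast
    have dom: "\<And>a b. \<delta> a = 0 \<Longrightarrow> \<delta> b = 0 \<Longrightarrow> a * b = 0 \<Longrightarrow> a = 0 \<or> b = 0"
      using L unfolding left_Ore_domain_def constants_def by blast
    have ore: "\<And>a b. \<delta> a = 0 \<Longrightarrow> \<delta> b = 0 \<Longrightarrow> a \<noteq> 0 \<Longrightarrow> b \<noteq> 0 \<Longrightarrow>
        \<exists>s t. \<delta> s = 0 \<and> \<delta> t = 0 \<and> s * a = t * b \<and> s * a \<noteq> 0"
      using L unfolding left_Ore_domain_def constants_def by blast
    have injc: "\<And>c y. \<delta> c = 0 \<Longrightarrow> c \<noteq> 0 \<Longrightarrow> y * c = 0 \<Longrightarrow> y = 0"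
    proof (rule ccontr)
      fix c y assume c: "\<delta> c = 0" "c \<noteq> 0" and yc: "y * c = 0" and y: "y \<noteq> 0"
      obtain m where "(\<delta>^^m) y = 0" using nil by blast
      then obtain k where k: "(\<delta>^^k) y \<noteq> 0" "\<delta> ((\<delta>^^k) y) = 0" using last_nz[OF y] by blast
      have "(\<delta>^^k) y * c = (\<delta>^^k) (y * c)" using pow_mult_const[OF c(1)] by simp
      also have "\<dots> = 0" using yc by simp
      finally show False using dom[OF k(2) c(1)] k(1) c(2) by blast
    qed
    show "critically_compressible \<delta>"
      unfolding critically_compressible_def
    proof (intro conjI allI impI)
      show "\<exists>a::'a. a \<noteq> 0" using one by blast
    next
      fix N assume "dsubmodule \<delta> N \<and> N \<noteq> {0}"
      then have N: "dsubmodule \<delta> N" and ne: "N \<noteq> {0}" by auto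
      obtain c where cN: "c \<in> N" and c: "c \<noteq> 0" "\<delta> c = 0" using nzconst[OF N ne] by blast
      show "embeds_into_sub \<delta> N"
        unfolding embeds_into_sub_def
      proof (intro exI[of _ "\<lambda>y. y * c"] conjI)
        show "dhom \<delta> (\<lambda>y. y * c)" unfolding dhom_def
          using dop_mult_const[OF c(2)] by (simp add: distrib_right)
        show "inj (\<lambda>y. y * c)"
        proof (rule injI)
          fix y z assume "y * c = z * c"
          then have "(y - z) * c = 0" by (simp add: left_diff_distrib)
          then have "y - z = 0" by (rule injc[OF c(2) c(1)])
          then show "y = z" by simp
        qed
        show "range (\<lambda>y. y * c) \<subseteq> N" using sub_mult[OF N cN] by blast
      qed
    next
      fix N assume "dsubmodule \<delta> N \<and> N \<noteq> {0}"
      then have N: "dsubmodule \<delta> N" and ne: "N \<noteq> {0}" by auto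
      show "\<not> embeds_into_factor \<delta> N"
      proof
        assume "embeds_into_factor \<delta> N"
        then obtain h where hadd: "\<And>u v. h (u + v) - (h u + h v) \<in> N"
          and hdop: "\<And>cs u. h (dop_act \<delta> cs u) - dop_act \<delta> cs (h u) \<in> N"
          and hinj: "\<And>u. h u \<in> N \<Longrightarrow> u = 0"
          unfolding embeds_into_factor_def by blast
        define g where "g = h 1"
        have h0: "h 0 \<in> N"
        proof -
          have "- (- h 0) \<in> N" using sub_neg[OF N hadd[of 0 0]] by simp
          then show ?thesis by simp
        qed
        have hA: "\<And>a. h a - a * g \<in> N"
          using hdop[of "[a]" 1 for a] unfolding g_def by (simp add: dop_single)
        have "h 0 - \<delta> g \<in> N" using hdop[of "[0,1]" 1] unfolding g_def by (simp add: dop_d der.one[OF D])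
        then have "h 0 - (h 0 - \<delta> g) \<in> N" using sub_diff[OF N h0] by blast
        then have dg: "\<delta> g \<in> N" by simp
        obtain c0 where c0: "\<delta> c0 = 0" "g - c0 \<in> N" using red[OF N dg] by blast
        obtain c where cN: "c \<in> N" and c: "c \<noteq> 0" "\<delta> c = 0" using nzconst[OF N ne] by blast
        show False
        proof (cases "c0 = 0")
          case True
          then have "h 1 \<in> N" using c0 unfolding g_def by simp
          then show False using hinj one by blast
        next
          case False
          obtain s t where st: "\<delta> s = 0" "\<delta> t = 0" "s * c0 = t * c" "s * c0 \<noteq> 0"
            using ore[OF c0(1) c(2) False c(1)] by blast
          have "s * g = s * (g - c0) + t * c" using st(3) by (simp add: right_diff_distrib)
          then have sg: "s * g \<in> N" using sub_add[OF N sub_mult[OF N c0(2)] sub_mult[OF N cN]] by simp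
          have "h s = (h s - s * g) + s * g" by simp
          then have "h s \<in> N" using sub_add[OF N hA[of s] sg] by simp
          then have "s = 0" by (rule hinj)
          then show False using st(4) by simp
        qed
      qed
    qed
  next
    assume C: "critically_compressible \<delta>"
    obtain a0 :: 'a where a0: "a0 \<noteq> 0" using C unfolding critically_compressible_def by blast
    have sub: "\<And>N. dsubmodule \<delta> N \<Longrightarrow> N \<noteq> {0} \<Longrightarrow> embeds_into_sub \<delta> N"
      using C unfolding critically_compressible_def by blast
    have fac: "\<And>N. dsubmodule \<delta> N \<Longrightarrow> N \<noteq> {0} \<Longrightarrow> \<not> embeds_into_factor \<delta> N"
      using C unfolding critically_compressible_def by blast
    have one: "(1::'a) \<noteq> 0"
    proof
      assume "(1::'a) = 0"
      then have "a0 * 1 = 0" by simp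
      then show False using a0 by simp
    qed
    have ann: "\<And>b y. \<delta> b = 0 \<Longrightarrow> b \<noteq> 0 \<Longrightarrow> y * b = 0 \<Longrightarrow> y = 0"
    proof (rule ccontr)
      fix b y assume b: "\<delta> b = 0" "b \<noteq> 0" and yb: "y * b = 0" and y: "y \<noteq> 0"
      have N1: "dsubmodule \<delta> (range (\<lambda>y. y * b))" by (rule range_sub[OF b(1)])
      have "b \<in> range (\<lambda>y. y * b)" by (rule range_eqI[of _ _ 1]) simp
      then have ne1: "range (\<lambda>y. y * b) \<noteq> {0}" using b(2) by blast
      obtain f where f: "dhom \<delta> f" "inj f" "range f \<subseteq> range (\<lambda>y. y * b)"
        using sub[OF N1 ne1] unfolding embeds_into_sub_def by blast
      define h where "h z = (SOME u. f z = u * b)" for z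
      have hb: "\<And>z. f z = h z * b"
      proof -
        fix z
        have "\<exists>u. f z = u * b" using f(3) by blast
        then show "f z = h z * b" unfolding h_def by (rule someI_ex)
      qed
      have fadd: "\<And>u v. f (u + v) = f u + f v" and fdop: "\<And>cs u. f (dop_act \<delta> cs u) = dop_act \<delta> cs (f u)"
        using f(1) unfolding dhom_def by blast+
      have f0: "f 0 = 0" using fadd[of 0 0] by simp
      have N2: "dsubmodule \<delta> {y. y * b = 0}" by (rule ann_sub[OF b(1)])
      have ne2: "{y. y * b = 0} \<noteq> {0}" using yb y by blast
      have "embeds_into_factor \<delta> {y. y * b = 0}"
        unfolding embeds_into_factor_def
      proof (intro exI[of _ h] conjI allI impI)
        fix u v
        have "(h (u + v) - (h u + h v)) * b = f (u + v) - (f u + f v)"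
          by (simp add: hb left_diff_distrib distrib_right)
        then show "h (u + v) - (h u + h v) \<in> {y. y * b = 0}" using fadd by simp
      next
        fix cs u
        have "(h (dop_act \<delta> cs u) - dop_act \<delta> cs (h u)) * b = f (dop_act \<delta> cs u) - dop_act \<delta> cs (h u * b)"
          by (simp add: hb left_diff_distrib dop_mult_const[OF b(1)])
        then show "h (dop_act \<delta> cs u) - dop_act \<delta> cs (h u) \<in> {y. y * b = 0}"
          using fdop hb by simp
      next
        fix u assume "h u \<in> {y. y * b = 0}"
        then have "f u = f 0" using hb f0 by simp
        then show "u = 0" using f(2) by (simp add: inj_eq)
      qed
      then show False using fac[OF N2 ne2] by blast
    qed
    show "left_Ore_domain (constants \<delta>)"
      unfolding left_Ore_domain_def constants_def
    proof (intro conjI ballI impI)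
      show "(1::'a) \<noteq> 0" by (rule one)
    next
      fix a b assume a: "a \<in> {a. \<delta> a = 0}" and b: "b \<in> {a. \<delta> a = 0}" and ab: "a * b = 0"
      show "a = 0 \<or> b = 0"
      proof (cases "b = 0")
        case False
        then show ?thesis using ann[of b a] b ab by simp
      qed simp
    next
      fix a b assume a: "a \<in> {a. \<delta> a = 0}" and b: "b \<in> {a. \<delta> a = 0}" and a0: "a \<noteq> 0" and b0: "b \<noteq> 0"
      have da: "\<delta> a = 0" and db: "\<delta> b = 0" using a b by auto
      show "\<exists>s\<in>{a. \<delta> a = 0}. \<exists>t\<in>{a. \<delta> a = 0}. s * a = t * b \<and> s * a \<noteq> 0"
      proof (cases "\<exists>u v. u * a = v * b \<and> u * a \<noteq> 0")
        case True
        then obtain u v where uv: "u * a = v * b" "u * a \<noteq> 0" by blast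
        obtain m where "(\<delta>^^m) (u * a) = 0" using nil by blast
        then obtain k where k: "(\<delta>^^k) (u * a) \<noteq> 0" "\<delta> ((\<delta>^^k) (u * a)) = 0"
          using last_nz[OF uv(2)] by blast
        have e1: "(\<delta>^^k) (u * a) = (\<delta>^^k) u * a" by (rule pow_mult_const[OF da])
        have e2: "(\<delta>^^k) (u * a) = (\<delta>^^k) v * b" using uv(1) pow_mult_const[OF db] by simp
        have "\<delta> ((\<delta>^^k) u) * a = 0" using k(2) e1 leib[of "(\<delta>^^k) u" a] da by simp
        then have s: "\<delta> ((\<delta>^^k) u) = 0" using ann[OF da a0] by blast
        have "\<delta> ((\<delta>^^k) v) * b = 0" using k(2) e2 leib[of "(\<delta>^^k) v" b] db by simp
        then have t: "\<delta> ((\<delta>^^k) v) = 0" using ann[OF db b0] by blast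
        show ?thesis
          using s t e1 e2 k(1) by (intro bexI[of _ "(\<delta>^^k) u"] bexI[of _ "(\<delta>^^k) v"]) auto
      next
        case False
        have N3: "dsubmodule \<delta> (range (\<lambda>y. y * a))" by (rule range_sub[OF da])
        have "a \<in> range (\<lambda>y. y * a)" by (rule range_eqI[of _ _ 1]) simp
        then have ne3: "range (\<lambda>y. y * a) \<noteq> {0}" using a0 by blast
        have z: "0 \<in> range (\<lambda>y. y * a)" by (rule range_eqI[of _ _ 0]) simp
        have "embeds_into_factor \<delta> (range (\<lambda>y. y * a))"
          unfolding embeds_into_factor_def
        proof (intro exI[of _ "\<lambda>y. y * b"] conjI allI impI)
          fix u v show "(u + v) * b - (u * b + v * b) \<in> range (\<lambda>y. y * a)"
            using z by (simp add: distrib_right)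
        next
          fix cs u show "dop_act \<delta> cs u * b - dop_act \<delta> cs (u * b) \<in> range (\<lambda>y. y * a)"
            using z dop_mult_const[OF db] by simp
        next
          fix u assume "u * b \<in> range (\<lambda>y. y * a)"
          then obtain w where "u * b = w * a" by blast
          then have "u * b = 0" using False by metis
          then show "u = 0" using ann[OF db b0] by blast
        qed
        then show ?thesis using fac[OF N3 ne3] by blast
      qed
    qed
  qed
qed

end
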